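(* Let $\ell\geq 2$ be an integer and let $(e_m)_{m\geq0}$ be the sequence defined below. Then $$\gamma=\sum_{n=1}^{2^{\ell-1}-1}\frac1n-(\ell-1)\log 2+\sum_{m=1}^{\infty}\frac{(-1)^{m-1}e_m}{m+1}\sum_{2^{\ell-1}\leq n<2^{\ell}}\frac{1}{n^{m+1}},$$ where $\gamma$ is Euler's constant and the series over $m$ converges. In particular, for $\ell=2$, $\gamma=1-\log 2+\sum_{m\ge1}\frac{(-1)^{m-1}e_m}{m+1}\bigl(2^{-m-1}+3^{-m-1}\bigr)$, and for $\ell=3$, $\gamma=1+\frac12+\frac13-2\log2+\sum_{m\ge1}\frac{(-1)^{m-1}e_m}{m+1}\bigl(4^{-m-1}+5^{-m-1}+6^{-m-1}+7^{-m-1}\bigr)$.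
   Context: The sequence $(e_m)_{m\geq0}$ of rational numbers is defined by $e_0=0$ and, for $m\geq1$, $$e_m=\frac{2^{m+1}+\sum_{j=1}^{m}\binom{m+1}{j}e_{m-j}}{2^{m+1}-2}.$$ (So $e_1=2$, etc.) $\gamma=0.5772\ldots$ denotes Euler's constant. *)

theory Defs
  imports "HOL-Analysis.Analysis"
begin

fun es :: "nat \<Rightarrow> rat list" where
  "es 0 = [0]"
| "es (Suc k) = (let m = Suc k; xs = es k in
     xs @ [(2 ^ (m + 1) + (\<Sum>j=1..m. of_nat ((m + 1) choose j) * xs ! (m - j)))
            / (2 ^ (m + 1) - 2)])"

definition e_seq :: "nat \<Rightarrow> rat" where
  "e_seq m = es m ! m"

lemma e_seq_0: "e_seq 0 = 0"
  by (simp add: e_seq_def)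

end

theory Submission
  imports Defs
begin

lemma es_length: "length (es k) = Suc k"
  by (induction k) (simp_all add: Let_def)

lemma es_nth: "i \<le> k \<Longrightarrow> es k ! i = e_seq i"
proof (induction k arbitrary: i)
  case 0
  then show ?case by (simp add: e_seq_def)
next
  case (Suc k)
  show ?case
  proof (cases "i \<le> k")
    case True
    then show ?thesis using Suc es_length[of k]
      by (simp add: Let_def nth_append)
  next
    case False
    then have "i = Suc k" using Suc by simp
    then show ?thesis by (simp add: e_seq_def)
  qed
qed

lemma e_seq_Suc: "e_seq (Suc k) = (2 ^ (k + 2) + (\<Sum>j=1..Suc k. of_nat ((k + 2) choose j) * e_seq (Suc k - j)))
            / (2 ^ (k + 2) - 2)"
proof -
  have "e_seq (Suc k) = (2 ^ (k + 2) + (\<Sum>j=1..Suc k. of_nat ((k + 2) choose j) * es k ! (Suc k - j)))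
            / (2 ^ (k + 2) - 2)"
    using es_length[of k] by (simp add: e_seq_def Let_def nth_append)
  also have "(\<Sum>j=1..Suc k. of_nat ((k + 2) choose j) * es k ! (Suc k - j))
     = (\<Sum>j=1..Suc k. of_nat ((k + 2) choose j) * e_seq (Suc k - j))"
    by (intro sum.cong refl) (auto intro!: es_nth)
  finally show ?thesis .
qed

definition ee :: "nat \<Rightarrow> real" where "ee m = real_of_rat (e_seq m)"

lemma ee_0: "ee 0 = 0" by (simp add: ee_def e_seq_0)

lemma ee_rec: "ee (Suc k) * (2 ^ (k + 2) - 2) = 2 ^ (k + 2) + (\<Sum>j=1..Suc k. real ((k + 2) choose j) * ee (Suc k - j))"
proof -
  have pos: "(2::rat) ^ (k + 2) - 2 \<noteq> 0"
  proof -
    have "(1::rat) \<le> 2^k" by simp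
    moreover have "(2::rat) ^ (k+2) = 4 * 2^k" by (simp add: power_add)
    ultimately show ?thesis by linarith
  qed
  have "e_seq (Suc k) * (2 ^ (k + 2) - 2) = 2 ^ (k + 2) + (\<Sum>j=1..Suc k. of_nat ((k + 2) choose j) * e_seq (Suc k - j))"
    using pos by (subst e_seq_Suc) simp
  then have "real_of_rat (e_seq (Suc k) * (2 ^ (k + 2) - 2)) = real_of_rat (2 ^ (k + 2) + (\<Sum>j=1..Suc k. of_nat ((k + 2) choose j) * e_seq (Suc k - j)))"
    by simp
  then show ?thesis
    by (simp add: ee_def of_rat_mult of_rat_add of_rat_diff of_rat_sum of_rat_power)
qed

lemma ee_rec2: "ee p * (2 ^ (p + 1) - 1) - (\<Sum>i\<le>p. ee i * real ((p + 1) choose (i + 1)))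
   = 2 ^ (p + 1) - (if p = 0 then 2 else 0)"
proof (cases p)
  case 0
  then show ?thesis by (simp add: ee_0)
next
  case (Suc k)
  have "(\<Sum>j=1..Suc k. real ((k + 2) choose j) * ee (Suc k - j)) = (\<Sum>i<Suc k. ee i * real ((k+2) choose (i+1)))"
  proof -
    have "(\<Sum>j=1..Suc k. real ((k + 2) choose j) * ee (Suc k - j)) = (\<Sum>i<Suc k. real ((k + 2) choose (Suc k - i)) * ee i)"
      by (rule sum.reindex_bij_witness[of _ "\<lambda>i. Suc k - i" "\<lambda>j. Suc k - j"]) auto
    also have "\<dots> = (\<Sum>i<Suc k. ee i * real ((k+2) choose (i+1)))"
    proof (intro sum.cong refl)
      fix i assume "i \<in> {..<Suc k}"
      then have "(k + 2) choose (Suc k - i) = (k+2) choose (i+1)"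
        by (subst binomial_symmetric) (auto simp: Suc_diff_le)
      then show "real ((k + 2) choose (Suc k - i)) * ee i = ee i * real ((k+2) choose (i+1))" by simp
    qed
    finally show ?thesis .
  qed
  moreover have "(\<Sum>i\<le>Suc k. ee i * real ((k+2) choose (i+1))) = (\<Sum>i<Suc k. ee i * real ((k+2) choose (i+1))) + ee (Suc k)"
    by (simp only: sum.atMost_Suc lessThan_Suc_atMost) simp
  moreover have "(2::real) ^ (Suc k + 1) = 2 ^ (k+2)" by simp
  ultimately show ?thesis using ee_rec[of k] Suc
    by (simp add: algebra_simps)
qed

lemma ee_nonneg: "ee m \<ge> 0"
proof (induction m rule: less_induct)
  case (less m)
  show ?case
  proof (cases m)
    case 0 then show ?thesis by (simp add: ee_0)
  next
    case (Suc k)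
    have d: "(2::real) ^ (k+2) - 2 > 0"
    proof -
      have "(1::real) \<le> 2^k" by simp
      moreover have "(2::real) ^ (k+2) = 4 * 2^k" by (simp add: power_add)
      ultimately show ?thesis by linarith
    qed
    have "0 \<le> 2 ^ (k + 2) + (\<Sum>j=1..Suc k. real ((k + 2) choose j) * ee (Suc k - j))"
      using less Suc by (intro add_nonneg_nonneg sum_nonneg mult_nonneg_nonneg) auto
    then have "0 \<le> ee (Suc k) * (2 ^ (k + 2) - 2)" using ee_rec[of k] by simp
    then show ?thesis using d Suc by (simp add: zero_le_mult_iff)
  qed
qed

lemma ee_rec3: "p \<ge> 1 \<Longrightarrow> ee p * (2 ^ (p + 1) - 2) = 2 ^ (p + 1) + (\<Sum>i<p. ee i * real ((p + 1) choose (i + 1)))"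
  using ee_rec2[of p] by (simp add: lessThan_Suc_atMost[symmetric] algebra_simps)

lemma lin_sum: "(\<Sum>i<p. real (i+1) * real ((p + 1) choose (i + 1))) = real (p+1) * 2^p - real (p+1)"
proof -
  have "real ((p+1) * 2^p) = real (\<Sum>j\<le>Suc p. j * (Suc p choose j))"
    using choose_linear_sum[of "Suc p"] by simp
  also have "\<dots> = (\<Sum>j\<le>Suc p. real j * real (Suc p choose j))" by simp
  also have "\<dots> = (\<Sum>i\<le>p. real (Suc i) * real (Suc p choose Suc i))"
    by (subst sum.atMost_Suc_shift) simp
  also have "\<dots> = (\<Sum>i<p. real (i+1) * real ((p + 1) choose (i + 1))) + real (p+1)"
    by (simp add: lessThan_Suc_atMost[symmetric])
  finally have "real ((p+1) * 2^p) = (\<Sum>i<p. real (i+1) * real ((p + 1) choose (i + 1))) + real (p+1)" .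
  moreover have "real ((p+1) * 2^p) = real (p+1) * 2^p" by (simp only: of_nat_mult of_nat_power) simp
  ultimately show ?thesis by linarith
qed

lemma ee_1: "ee 1 = 2" "ee (Suc 0) = 2"
  using ee_rec3[of 1] by (simp_all add: ee_0)

lemma ee_le: "ee m \<le> real m + 1"
proof (induction m rule: less_induct)
  case (less p)
  consider "p = 0" | "p = 1" | "p \<ge> 2" by linarith
  then show ?case
  proof cases
    case 1 then show ?thesis by (simp add: ee_0)
  next
    case 2 then show ?thesis using ee_1 by simp
  next
    case 3
    have "(\<Sum>i<p. ee i * real ((p + 1) choose (i + 1))) \<le> (\<Sum>i<p. real (i+1) * real ((p + 1) choose (i + 1)))"
      using less by (intro sum_mono mult_right_mono) (auto simp: add.commute)
    then have A: "ee p * (2 ^ (p + 1) - 2) \<le> 2 ^ (p + 1) + real (p+1) * 2^p - real (p+1)"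
      using ee_rec3[of p] 3 lin_sum[of p] by simp
    have "(4::real) \<le> 2^p" using 3
      by (metis power2_eq_square numeral_Bit0 one_add_one power_increasing_iff one_less_numeral_iff semiring_norm(76)  mult_2 numeral_Bit0)
    have B: "2 ^ (p + 1) + real (p+1) * 2^p - real (p+1) \<le> (real p + 1) * (2 ^ (p + 1) - 2)"
    proof -
      have "3 * (2^p - 1) \<le> (real p + 1) * (2^p - 1)"
        using 3 \<open>4 \<le> 2^p\<close> by (intro mult_right_mono) auto
      then show ?thesis using \<open>4 \<le> 2^p\<close> by (simp add: algebra_simps)
    qed
    have pos: "(2::real) ^ (p + 1) - 2 > 0" using \<open>4 \<le> 2^p\<close> by simp
    from A B have "ee p * (2 ^ (p + 1) - 2) \<le> (real p + 1) * (2 ^ (p + 1) - 2)" by linarith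
    then show ?thesis using pos by simp
  qed
qed

definition dd :: "nat \<Rightarrow> real" where
  "dd k = (if k = 0 then 0 else (-1) ^ k * ee (k - 1) / real k)"

lemma dd_0: "dd 0 = 0" and dd_1: "dd 1 = 0"
  by (simp_all add: dd_def ee_0)

lemma dd_bound: "\<bar>dd k\<bar> \<le> 1"
proof (cases k)
  case 0 then show ?thesis by (simp add: dd_def)
next
  case (Suc j)
  have "\<bar>dd k\<bar> = ee j / real (Suc j)" using Suc ee_nonneg[of j] by (simp add: dd_def abs_mult)
  also have "\<dots> \<le> 1" using ee_le[of j] by simp
  finally show ?thesis .
qed

definition phi :: "real \<Rightarrow> real" where "phi z = (\<Sum>k. dd k * z ^ k)"

lemma phi_summable: "\<bar>z\<bar> < 1 \<Longrightarrow> summable (\<lambda>k. dd k * z ^ k)"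
proof (rule summable_comparison_test[OF _ summable_geometric[of "\<bar>z\<bar>"]])
  show "\<exists>N. \<forall>n\<ge>N. norm (dd n * z ^ n) \<le> \<bar>z\<bar> ^ n"
  proof (intro exI allI impI)
    fix n :: nat
    have "norm (dd n * z ^ n) = \<bar>dd n\<bar> * \<bar>z\<bar> ^ n" by (simp add: abs_mult power_abs)
    also have "\<dots> \<le> 1 * \<bar>z\<bar> ^ n" by (intro mult_right_mono dd_bound) auto
    finally show "norm (dd n * z ^ n) \<le> \<bar>z\<bar> ^ n" by simp
  qed
qed (auto)

lemma phi_sums: "\<bar>z\<bar> < 1 \<Longrightarrow> (\<lambda>k. dd k * z ^ k) sums phi z"
  unfolding phi_def using phi_summable by (simp add: summable_sums)

lemma double_series:
  fixes A :: "nat \<times> nat \<Rightarrow> real" and B :: "nat \<Rightarrow> nat \<Rightarrow> real"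
  assumes nonneg: "\<And>k j. 0 \<le> B k j" and bound: "\<And>k j. \<bar>A (k,j)\<bar> \<le> B k j"
    and Bsums: "\<And>k. (\<lambda>j. B k j) sums Bs k" and Bs_summ: "summable Bs"
    and Asums: "\<And>k. (\<lambda>j. A (k,j)) sums r k"
  shows "r sums (infsum A UNIV)" and "(\<lambda>n. \<Sum>k\<le>n. A (k, n-k)) sums (infsum A UNIV)"
proof -
  have Bs_nn: "Bs k \<ge> 0" for k
    using Bsums[of k] nonneg by (metis sums_unique suminf_nonneg sums_summable)
  have "(\<lambda>p. B (fst p) (snd p)) summable_on Sigma UNIV (\<lambda>_. UNIV)"
  proof (rule summable_on_SigmaI[where g = Bs])
    show "((\<lambda>y. B (fst (x, y)) (snd (x, y))) has_sum Bs x) UNIV" for x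
      using Bsums[of x] nonneg by (auto intro: sums_nonneg_imp_has_sum)
    show "Bs summable_on UNIV" using Bs_summ Bs_nn summable_on_UNIV_nonneg_real_iff by blast
  qed (use nonneg in auto)
  then have Bsum: "(\<lambda>p. B (fst p) (snd p)) summable_on UNIV" by simp
  have "(\<lambda>p. norm (A p)) summable_on UNIV"
    by (rule summable_on_comparison_test[OF Bsum]) (use bound in auto)
  then have Asum: "A summable_on UNIV" by (rule abs_summable_summable)
  define S where "S = infsum A UNIV"
  have hasS: "(A has_sum S) (Sigma UNIV (\<lambda>_. UNIV))" using Asum unfolding S_def by simp
  have inner: "((\<lambda>j. A (k,j)) has_sum r k) UNIV" for k
  proof (rule norm_summable_imp_has_sum[OF _ Asums])
    show "summable (\<lambda>j. norm (A (k, j)))"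
      by (rule summable_comparison_test[OF _ sums_summable[OF Bsums[of k]]]) (use bound in auto)
  qed
  have "(r has_sum S) UNIV" by (rule has_sum_SigmaD[OF hasS]) (use inner in auto)
  then show "r sums (infsum A UNIV)" unfolding S_def[symmetric] by (rule has_sum_imp_sums)
  have "((\<lambda>p. A (snd p, fst p - snd p)) has_sum S) (Sigma UNIV (\<lambda>n. {..n}))"
  proof -
    have "(A has_sum S) UNIV = ((\<lambda>p. A (snd p, fst p - snd p)) has_sum S) (Sigma UNIV (\<lambda>n. {..n}))"
      by (rule has_sum_reindex_bij_witness[where i = "\<lambda>p. (snd p, fst p - snd p)" and j = "\<lambda>p. (fst p + snd p, fst p)"]) auto
    then show ?thesis using hasS by simp
  qed
  then have "((\<lambda>n. \<Sum>k\<le>n. A (k, n-k)) has_sum S) UNIV"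
    by (rule has_sum_SigmaD) auto
  then show "(\<lambda>n. \<Sum>k\<le>n. A (k, n-k)) sums (infsum A UNIV)" unfolding S_def[symmetric] by (rule has_sum_imp_sums)
qed

definition nb :: "nat \<Rightarrow> nat \<Rightarrow> real" where "nb k j = real ((k + j - 1) choose j)"

lemma gch: "((- real k) gchoose j) = (-1)^j * nb k j"
proof (cases "k + j = 0")
  case True then show ?thesis by (simp add: nb_def)
next
  case False
  then have "1 \<le> k + j" by linarith
  then have "real (k + j - 1) = real (k + j) - real 1" by (rule of_nat_diff)
  then have "real k + real j - 1 = real (k + j - 1)" by simp
  then have "((- real k) gchoose j) = (-1)^j * (real (k + j - 1) gchoose j)"
    by (simp only: gbinomial_minus)
  then show ?thesis by (simp only: nb_def binomial_gbinomial)
qed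

lemma nb_nonneg: "nb k j \<ge> 0" by (simp add: nb_def)

lemma sums1: assumes "\<bar>u\<bar> < 1" shows "(\<lambda>j. (-1)^j * nb k j * u^j) sums (1 / (1 + u) ^ k)"
proof -
  have "(\<lambda>n. ((- real k) gchoose n) * u^n) sums (1 + u) powr (- real k)"
    using gen_binomial_real[OF assms] .
  moreover have "(1 + u) powr (- real k) = 1 / (1 + u) ^ k"
    using assms by (simp add: powr_minus powr_realpow divide_inverse)
  moreover have "(\<lambda>n. ((- real k) gchoose n) * u^n) = (\<lambda>j. (-1)^j * nb k j * u^j)"
    by (simp only: gch)
  ultimately show ?thesis by simp
qed

lemma sums2: assumes "\<bar>u\<bar> < 1" shows "(\<lambda>j. nb k j * u^j) sums (1 / (1 - u) ^ k)"
proof -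
  have "\<bar>-u\<bar> < 1" using assms by simp
  have "(\<lambda>n. ((- real k) gchoose n) * (-u)^n) sums (1 + -u) powr (- real k)"
    using gen_binomial_real[OF \<open>\<bar>-u\<bar> < 1\<close>] .
  moreover have "(1 + -u) powr (- real k) = 1 / (1 - u) ^ k"
    using assms by (simp add: powr_minus powr_realpow divide_inverse)
  moreover have "((- real k) gchoose n) * (-u)^n = nb k n * u^n" for n
  proof -
    have e1: "(-u)^n = (-1)^n * u^n" by (rule power_minus)
    have "((- real k) gchoose n) * (-u)^n = ((-1)^n * (-1)^n) * nb k n * u^n"
      by (simp only: gch e1 mult.assoc mult.commute mult.left_commute)
    also have "(-1::real)^n * (-1)^n = 1" by (simp flip: power_add)
    finally show ?thesis by simp
  qed
  ultimately show ?thesis by simp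
qed

definition bc :: "nat \<Rightarrow> real" where
  "bc n = (\<Sum>k\<le>n. dd k * (-1)^(n-k) * nb k (n-k))"

lemma coef: "dd n * 2^n - dd n - bc n = (-1)^n * 2^n / real n + (if n = 1 then 2 else 0)"
proof (cases n)
  case 0 then show ?thesis by (simp add: bc_def dd_0)
next
  case (Suc p)
  have tm: "dd (Suc i) * (-1)^(Suc p - Suc i) * nb (Suc i) (Suc p - Suc i)
      = (-1)^(Suc p) / real (Suc p) * (ee i * real (Suc p choose Suc i))" if "i \<le> p" for i
  proof -
    have s: "(-1::real)^(Suc i) * (-1)^(p-i) = (-1)^(Suc p)"
      using that by (simp flip: power_add)
    have nbv: "nb (Suc i) (p - i) = real (p choose i)"
      using that by (simp add: nb_def binomial_symmetric[symmetric])
    have bin: "real (Suc i) * real (Suc p choose Suc i) = real (Suc p) * real (p choose i)"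
      using Suc_times_binomial[of i p] by (metis of_nat_mult)
    have "dd (Suc i) * (-1)^(Suc p - Suc i) * nb (Suc i) (Suc p - Suc i)
        = ((-1)^(Suc i) * (-1)^(p-i)) * ee i * real (p choose i) / real (Suc i)"
      by (simp add: dd_def nbv)
    also have "\<dots> = (-1)^(Suc p) * ee i * real (p choose i) / real (Suc i)" by (simp only: s)
    also have "\<dots> = (-1)^(Suc p) / real (Suc p) * (ee i * real (Suc p choose Suc i))"
    proof -
      have "real (p choose i) / real (Suc i) = real (Suc p choose Suc i) / real (Suc p)"
        using bin by (simp add: field_simps del: of_nat_Suc binomial_Suc_Suc)
      then show ?thesis by (simp add: field_simps del: of_nat_Suc binomial_Suc_Suc)
    qed
    finally show ?thesis .
  qed
  have "bc (Suc p) = dd 0 * (-1)^(Suc p) * nb 0 (Suc p) + (\<Sum>i\<le>p. dd (Suc i) * (-1)^(Suc p - Suc i) * nb (Suc i) (Suc p - Suc i))"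
    unfolding bc_def by (subst sum.atMost_Suc_shift) simp
  also have "\<dots> = (\<Sum>i\<le>p. (-1)^(Suc p) / real (Suc p) * (ee i * real (Suc p choose Suc i)))"
    by (simp only: dd_0 mult_zero_left add_0_left) (rule sum.cong[OF refl tm], simp)
  also have "\<dots> = (-1)^(Suc p) / real (Suc p) * (\<Sum>i\<le>p. ee i * real ((p+1) choose (i+1)))"
    by (simp add: sum_distrib_left del: binomial_Suc_Suc)
  finally have bcv: "bc (Suc p) = (-1)^(Suc p) / real (Suc p) * (\<Sum>i\<le>p. ee i * real ((p+1) choose (i+1)))" .
  have ddv: "dd (Suc p) = (-1)^(Suc p) / real (Suc p) * ee p" by (simp add: dd_def)
  have "dd n * 2^n - dd n - bc n = (-1)^(Suc p) / real (Suc p) *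
        (ee p * (2 ^ (p + 1) - 1) - (\<Sum>i\<le>p. ee i * real ((p + 1) choose (i + 1))))"
  proof -
    have "dd n * 2^n - dd n - bc n = dd (Suc p) * (2^(p+1) - 1) - bc (Suc p)"
      unfolding Suc by (simp only: right_diff_distrib mult_1_right Suc_eq_plus1)
    also have "\<dots> = (-1)^(Suc p) / real (Suc p) * ee p * (2^(p+1) - 1) - (-1)^(Suc p) / real (Suc p) * (\<Sum>i\<le>p. ee i * real ((p+1) choose (i+1)))"
      by (simp only: ddv bcv)
    finally show ?thesis by (simp only: right_diff_distrib mult.assoc)
  qed
  also have "\<dots> = (-1)^(Suc p) / real (Suc p) * (2 ^ (p + 1) - (if p = 0 then 2 else 0))"
    by (simp only: ee_rec2)
  also have "\<dots> = (-1)^n * 2^n / real n + (if n = 1 then 2 else 0)"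
    using Suc by auto
  finally show ?thesis .
qed

lemma key:
  fixes u :: real
  assumes u0: "0 < u" and u1: "u \<le> 1/4"
  shows "phi (2*u) - phi u - phi (u/(1+u)) = 2*u - ln (1 + 2*u)"
proof -
  define w where "w = u / (1 + u)"
  have ua: "\<bar>u\<bar> < 1" using assms by simp
  have wa: "\<bar>w\<bar> < 1" using assms by (simp add: w_def)
  have r1: "u / (1 - u) < 1" using assms by (simp add: field_simps)
  define A where "A = (\<lambda>p::nat\<times>nat. dd (fst p) * ((-1)^(snd p) * nb (fst p) (snd p) * u^(snd p)) * u^(fst p))"
  define B where "B = (\<lambda>k j. u^k * (nb k j * u^j))"
  have h1: "0 \<le> B k j" for k j using u0 by (simp add: B_def nb_nonneg)
  have h2: "\<bar>A (k, j)\<bar> \<le> B k j" for k j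
    proof -
      have "\<bar>A (k, j)\<bar> = \<bar>dd k\<bar> * (nb k j * u^j * u^k)"
        using u0 nb_nonneg[of k j] by (simp add: A_def abs_mult power_abs)
      also have "\<dots> \<le> 1 * (nb k j * u^j * u^k)"
        using u0 nb_nonneg[of k j] by (intro mult_right_mono dd_bound) auto
      finally show ?thesis by (simp add: B_def mult_ac)
    qed
  have h3: "(\<lambda>j. B k j) sums (u^k * (1 / (1 - u) ^ k))" for k
      unfolding B_def by (rule sums_mult[OF sums2[OF ua]])
  have h4: "summable (\<lambda>k. u^k * (1 / (1 - u) ^ k))"
    proof -
      have "(\<lambda>k. u^k * (1 / (1 - u) ^ k)) = (\<lambda>k. (u / (1 - u))^k)"
        by (simp add: power_divide)
      moreover have "summable (\<lambda>k. (u / (1 - u))^k)"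
        using r1 u0 u1 by (intro summable_geometric) simp
      ultimately show ?thesis by simp
    qed
  have h5: "(\<lambda>j. A (k, j)) sums (dd k * (1 / (1 + u) ^ k) * u^k)" for k
      unfolding A_def fst_conv snd_conv
      by (intro sums_mult sums_mult2 sums1[OF ua])
  note DS = double_series[of B A, OF h1 h2 h3 h4 h5]
  have "(\<lambda>k. dd k * (1 / (1 + u) ^ k) * u^k) = (\<lambda>k. dd k * w^k)"
    by (simp add: w_def power_divide)
  then have "(\<lambda>k. dd k * w^k) sums (infsum A UNIV)" using DS(1) by simp
  then have IA: "infsum A UNIV = phi w" using phi_sums[OF wa] sums_unique2 by blast
  have diag: "(\<Sum>k\<le>n. A (k, n-k)) = bc n * u^n" for n
  proof -
    have "(\<Sum>k\<le>n. A (k, n-k)) = (\<Sum>k\<le>n. dd k * (-1)^(n-k) * nb k (n-k) * u^n)"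
    proof (intro sum.cong refl)
      fix k assume "k \<in> {..n}"
      then have "u^(n-k) * u^k = u^n" by (simp flip: power_add)
      moreover have "A (k, n-k) = dd k * (-1)^(n-k) * nb k (n-k) * (u^(n-k) * u^k)"
        unfolding A_def fst_conv snd_conv by (simp only: mult.assoc)
      ultimately show "A (k, n-k) = dd k * (-1)^(n-k) * nb k (n-k) * u^n" by simp
    qed
    also have "\<dots> = bc n * u^n" by (simp add: bc_def sum_distrib_right)
    finally show ?thesis .
  qed
  have S3: "(\<lambda>n. bc n * u^n) sums phi w" using DS(2) IA by (simp add: diag)
  have S1: "(\<lambda>n. dd n * (2*u)^n) sums phi (2*u)" using assms by (intro phi_sums) simp
  have S2: "(\<lambda>n. dd n * u^n) sums phi u" using phi_sums[OF ua] .
  have F1: "(\<lambda>n. dd n * (2*u)^n - dd n * u^n - bc n * u^n) sums (phi (2*u) - phi u - phi w)"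
    by (intro sums_diff S1 S2 S3)
  have EQ: "(\<lambda>n. dd n * (2*u)^n - dd n * u^n - bc n * u^n) = (\<lambda>n. ((-1)^n * 2^n / real n + (if n = 1 then 2 else 0)) * u^n)"
  proof
    fix n
    have "dd n * (2*u)^n - dd n * u^n - bc n * u^n = (dd n * 2^n - dd n - bc n) * u^n"
      by (simp add: power_mult_distrib algebra_simps)
    then show "dd n * (2*u)^n - dd n * u^n - bc n * u^n = ((-1)^n * 2^n / real n + (if n = 1 then 2 else 0)) * u^n"
      by (simp only: coef)
  qed
  have F3: "(\<lambda>n. ((-1)^n * 2^n / real n + (if n = 1 then 2 else 0)) * u^n) sums (- ln (1 + 2*u) + 2*u)"
  proof -
    have "\<bar>2*u\<bar> < 1" using assms by simp
    from sums_minus[OF ln_series'[OF this]]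
    have L: "(\<lambda>n. (-(2*u))^n / real n) sums (- ln (1 + 2*u))" by simp
    have "(\<lambda>n. (-(2*u))^n / real n) = (\<lambda>n. (-1)^n * 2^n / real n * u^n)"
    proof
      fix n
      have "(-(2*u))^n = (-1)^n * (2*u)^n" by (rule power_minus)
      also have "(2*u)^n = 2^n * u^n" by (rule power_mult_distrib)
      finally have "(-(2*u))^n = (-1)^n * 2^n * u^n" by (simp only: mult.assoc)
      then show "(-(2*u))^n / real n = (-1)^n * 2^n / real n * u^n" by simp
    qed
    with L have L2: "(\<lambda>n. (-1)^n * 2^n / real n * u^n) sums (- ln (1 + 2*u))" by simp
    have P: "(\<lambda>n. (if n = 1 then 2 else 0) * u^n) sums (2*u)"
    proof -
      have "(\<lambda>n. (if n = 1 then 2 else 0) * u^n) = (\<lambda>n. 2 * ((if n = 1 then 1 else 0) * u^n))" by auto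
      then show ?thesis using sums_mult[OF powser_sums_if[of 1 u], of 2] by simp
    qed
    have "(\<lambda>n. (-1)^n * 2^n / real n * u^n + (if n = 1 then 2 else 0) * u^n) sums (- ln (1 + 2*u) + 2*u)"
      by (rule sums_add[OF L2 P])
    moreover have "(\<lambda>n. (-1)^n * 2^n / real n * u^n + (if n = 1 then 2 else 0) * u^n) = (\<lambda>n. ((-1)^n * 2^n / real n + (if n = 1 then 2 else 0)) * u^n)"
      by (intro ext) (simp only: distrib_right)
    ultimately show ?thesis by (simp only:)
  qed
  have "phi (2*u) - phi u - phi w = - ln (1 + 2*u) + 2*u"
    using sums_unique2[OF F1[unfolded EQ] F3] .
  then show ?thesis unfolding w_def by linarith
qed

lemma phi_shift: assumes "\<bar>z\<bar> < 1" shows "(\<lambda>m. dd (m+2) * z^(m+2)) sums phi z"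
proof -
  have "(\<lambda>m. dd (m+2) * z^(m+2)) sums (phi z - (\<Sum>i<2. dd i * z^i))"
    using sums_iff_shift[of "\<lambda>k. dd k * z^k" 2 "phi z - (\<Sum>i<2. dd i * z^i)"] phi_sums[OF assms] by simp
  moreover have "(\<Sum>i<2. dd i * z^i) = 0" by (simp add: numeral_2_eq_2 dd_def ee_0)
  ultimately show ?thesis by simp
qed

lemma phi_bound: assumes "0 \<le> z" "z \<le> 1/2" shows "\<bar>phi z\<bar> \<le> 2 * z^2"
proof -
  have za: "\<bar>z\<bar> < 1" using assms by simp
  have G: "(\<lambda>m. z^2 * z^m) sums (z^2 * (1 / (1 - z)))"
    using za by (intro sums_mult geometric_sums) simp
  have le: "norm (dd (m+2) * z^(m+2)) \<le> z^2 * z^m" for m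
  proof -
    have "norm (dd (m+2) * z^(m+2)) = \<bar>dd (m+2)\<bar> * z^(m+2)" using assms by (simp add: abs_mult)
    also have "\<dots> \<le> 1 * z^(m+2)" using assms by (intro mult_right_mono dd_bound) auto
    also have "1 * z^(m+2) = z^2 * z^m" by (simp only: mult_1_left power_add mult.commute)
    finally show ?thesis .
  qed
  have sn: "summable (\<lambda>m. norm (dd (m+2) * z^(m+2)))"
    by (rule summable_comparison_test[OF _ sums_summable[OF G]]) (use le in auto)
  have "\<bar>phi z\<bar> = norm (\<Sum>m. dd (m+2) * z^(m+2))" using sums_unique[OF phi_shift[OF za]] by simp
  also have "\<dots> \<le> (\<Sum>m. norm (dd (m+2) * z^(m+2)))" by (rule summable_norm[OF sn])
  also have "\<dots> \<le> (\<Sum>m. z^2 * z^m)" by (rule suminf_le[OF le sn sums_summable[OF G]])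
  also have "\<dots> = z^2 * (1 / (1 - z))" using sums_unique[OF G] by simp
  also have "\<dots> \<le> z^2 * 2" using assms by (intro mult_left_mono) (auto simp: field_simps)
  finally show ?thesis by simp
qed

lemma funeq: fixes x :: real assumes "x \<ge> 2"
  shows "phi (1/x) - phi (1/(2*x)) - phi (1/(2*x+1)) = 1/x - (ln (x+1) - ln x)"
proof -
  define u where "u = 1/(2*x)"
  have u0: "0 < u" and u1: "u \<le> 1/4" using assms by (auto simp: u_def field_simps)
  have "2*u = 1/x" by (simp add: u_def)
  moreover have "u/(1+u) = 1/(2*x+1)" using assms by (simp add: u_def field_simps)
  moreover have "ln (1 + 2*u) = ln (x+1) - ln x"
  proof -
    have "1 + 2*u = (x+1)/x" using assms by (simp add: u_def field_simps)
    then show ?thesis using assms by (simp add: ln_div)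
  qed
  ultimately show ?thesis using key[OF u0 u1] by (simp add: u_def)
qed

lemma block_split: fixes a c :: nat shows "(\<Sum>n\<in>{2*a..<2*(a+c)}. f n) = (\<Sum>n\<in>{a..<a+c}. f (2*n) + f (2*n+1))"
proof (induction c)
  case 0 then show ?case by simp
next
  case (Suc c)
  have "{2*a..<2*(a+Suc c)} = {2*a..<2*(a+c)} \<union> {2*(a+c), 2*(a+c)+1}" by auto
  then have "(\<Sum>n\<in>{2*a..<2*(a+Suc c)}. f n) = (\<Sum>n\<in>{2*a..<2*(a+c)}. f n) + (f (2*(a+c)) + f (2*(a+c)+1))"
    by (simp add: sum.union_disjoint algebra_simps)
  also have "\<dots> = (\<Sum>n\<in>{a..<a+Suc c}. f (2*n) + f (2*n+1))" using Suc by simp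
  finally show ?case .
qed

lemma harm_block: "a \<ge> 1 \<Longrightarrow> harm (a + c - 1) = harm (a - 1) + (\<Sum>n\<in>{a..<a+c}. 1 / real n)"
proof (induction c)
  case 0 then show ?case by simp
next
  case (Suc c)
  have e: "a + Suc c - 1 = Suc (a + c - 1)" "Suc (a + c - 1) = a + c" using Suc.prems by simp_all
  have "harm (Suc (a + c - 1)) = harm (a + c - 1) + inverse (real (Suc (a + c - 1)))" by (rule harm_Suc)
  then have "harm (a + Suc c - 1) = harm (a + c - 1) + inverse (real (a + c))"
    unfolding e(1) by (simp only: e(2))
  then show ?case using Suc by (simp add: inverse_eq_divide)
qed

definition Q :: "nat \<Rightarrow> real" where
  "Q k = harm (2^k - 1) - real k * ln 2 + (\<Sum>n\<in>{2^k..<2^(k+1)}. phi (1 / real n))"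

lemma Q_step: assumes "k \<ge> 1" shows "Q (Suc k) = Q k"
proof -
  define N :: nat where "N = 2^k"
  have N2: "N \<ge> 2" using assms unfolding N_def
    by (metis one_le_numeral power_increasing power_one_right)
  have e1: "(2::nat)^(Suc k) = 2*N" and e2: "(2::nat)^(Suc k + 1) = 2*(N+N)" and e3: "(2::nat)^(k+1) = N + N"
    by (simp_all add: N_def)
  have H: "harm (2*N - 1) = harm (N - 1) + (\<Sum>n\<in>{N..<N+N}. 1 / real n)"
    using harm_block[of N N] N2 by (simp add: mult_2)
  have L: "(\<Sum>n\<in>{N..<N+N}. ln (real n + 1) - ln (real n)) = ln 2"
  proof -
    have "(\<Sum>n\<in>{N..<N+N}. ln (real n + 1) - ln (real n)) = (\<Sum>n = N..<N+N. ln (real (Suc n)) - ln (real n))"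
      by (simp add: add.commute)
    also have "\<dots> = ln (real (N+N)) - ln (real N)" by (rule sum_Suc_diff') simp
    also have "\<dots> = ln 2"
    proof -
      have "real (N+N) = 2 * real N" by simp
      moreover have "ln (2 * real N) = ln 2 + ln (real N)" using N2 by (subst ln_mult) auto
      ultimately show ?thesis by simp
    qed
    finally show ?thesis .
  qed
  have B: "(\<Sum>n\<in>{2*N..<2*(N+N)}. phi (1 / real n)) = (\<Sum>n\<in>{N..<N+N}. phi (1 / (2 * real n)) + phi (1 / (2 * real n + 1)))"
  proof -
    have "(\<Sum>n\<in>{2*N..<2*(N+N)}. phi (1 / real n)) = (\<Sum>n\<in>{N..<N+N}. phi (1 / real (2*n)) + phi (1 / real (2*n+1)))"
      by (rule block_split)
    then show ?thesis by (simp add: add.commute)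
  qed
  have F: "(\<Sum>n\<in>{N..<N+N}. phi (1 / (2 * real n)) + phi (1 / (2 * real n + 1)))
      = (\<Sum>n\<in>{N..<N+N}. phi (1 / real n)) - (\<Sum>n\<in>{N..<N+N}. 1 / real n) + (\<Sum>n\<in>{N..<N+N}. ln (real n + 1) - ln (real n))"
  proof -
    have "(\<Sum>n\<in>{N..<N+N}. phi (1 / (2 * real n)) + phi (1 / (2 * real n + 1)))
        = (\<Sum>n\<in>{N..<N+N}. phi (1 / real n) - 1 / real n + (ln (real n + 1) - ln (real n)))"
    proof (intro sum.cong refl)
      fix n assume "n \<in> {N..<N+N}"
      then have "real n \<ge> 2" using N2 by simp
      from funeq[OF this] show "phi (1 / (2 * real n)) + phi (1 / (2 * real n + 1)) = phi (1 / real n) - 1 / real n + (ln (real n + 1) - ln (real n))"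
        by linarith
    qed
    then show ?thesis by (simp add: sum.distrib sum_subtractf)
  qed
  have "Q (Suc k) = harm (2*N - 1) - (real k + 1) * ln 2 + (\<Sum>n\<in>{2*N..<2*(N+N)}. phi (1 / real n))"
    unfolding Q_def e1 e2 by simp
  also have "\<dots> = Q k" unfolding Q_def e3 N_def[symmetric] H B F L by (simp add: algebra_simps)
  finally show ?thesis .
qed

lemma Q_const: "k \<ge> 1 \<Longrightarrow> Q (j + k) = Q k"
  by (induction j) (simp_all add: Q_step)

lemma Q_lim: "Q \<longlonglongrightarrow> euler_mascheroni"
proof -
  have sm: "strict_mono (\<lambda>k::nat. (2::nat)^k)"
    by (rule strict_monoI) (simp add: power_strict_increasing)
  have T1: "(\<lambda>k. harm (2^k) - ln (real (2^k))) \<longlonglongrightarrow> (euler_mascheroni::real)"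
    using LIMSEQ_subseq_LIMSEQ[OF euler_mascheroni_LIMSEQ sm] by (simp add: o_def)
  have T2: "(\<lambda>k. inverse (real (2^k))) \<longlonglongrightarrow> (0::real)"
    using LIMSEQ_inverse_realpow_zero[of 2] by simp
  have T3: "(\<lambda>k. \<Sum>n\<in>{2^k..<2^(k+1)}. phi (1 / real n)) \<longlonglongrightarrow> 0"
  proof (rule Lim_null_comparison[where g = "\<lambda>k. 2 * inverse (real (2^k))"])
    show "(\<lambda>k. 2 * inverse (real (2^k))) \<longlonglongrightarrow> (0::real)" using tendsto_mult_right_zero[OF T2] by simp
    show "\<forall>\<^sub>F k in sequentially. norm (\<Sum>n\<in>{2^k..<2^(k+1)}. phi (1 / real n)) \<le> 2 * inverse (real (2^k))"
    proof (rule eventually_sequentiallyI[of 1])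
      fix k :: nat assume k: "k \<ge> 1"
      define N :: nat where "N = 2^k"
      have N2: "N \<ge> 2" using k unfolding N_def
        by (metis one_le_numeral power_increasing power_one_right)
      have e3: "(2::nat)^(k+1) = N + N" by (simp add: N_def)
      have bnd: "\<bar>phi (1 / real n)\<bar> \<le> 2 / (real N)^2" if "n \<in> {N..<N+N}" for n
      proof -
        have nN: "real n \<ge> real N" using that by simp
        have "\<bar>phi (1 / real n)\<bar> \<le> 2 * (1 / real n)^2"
          using N2 nN by (intro phi_bound) (auto simp: field_simps)
        also have "\<dots> \<le> 2 * (1 / real N)^2"
          using N2 nN by (intro mult_left_mono power_mono) (auto simp: field_simps)
        finally show ?thesis by (simp add: power_divide)
      qed
      have "norm (\<Sum>n\<in>{N..<N+N}. phi (1 / real n)) \<le> (\<Sum>n\<in>{N..<N+N}. \<bar>phi (1 / real n)\<bar>)"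
        by (simp add: sum_abs)
      also have "\<dots> \<le> real (card {N..<N+N}) * (2 / (real N)^2)"
        by (rule sum_bounded_above) (use bnd in auto)
      also have "\<dots> = 2 * inverse (real N)" using N2 by (simp add: power2_eq_square field_simps)
      finally show "norm (\<Sum>n\<in>{2^k..<2^(k+1)}. phi (1 / real n)) \<le> 2 * inverse (real (2^k))"
        unfolding e3 N_def[symmetric] .
    qed
  qed
  have eq: "Q k = (harm (2^k) - ln (real (2^k))) - inverse (real (2^k)) + (\<Sum>n\<in>{2^k..<2^(k+1)}. phi (1 / real n))" for k
  proof -
    have "Suc (2^k - 1) = 2^k" by simp
    then have "harm (2^k) = harm (2^k - 1) + inverse (real (2^k))" by (metis harm_Suc)
    moreover have "ln (real (2^k)) = real k * ln 2" by (simp add: ln_realpow)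
    ultimately show ?thesis unfolding Q_def by simp
  qed
  have "(\<lambda>k. (harm (2^k) - ln (real (2^k))) - inverse (real (2^k)) + (\<Sum>n\<in>{2^k..<2^(k+1)}. phi (1 / real n))) \<longlonglongrightarrow> euler_mascheroni - 0 + 0"
    by (intro tendsto_intros T1 T2 T3)
  then show ?thesis unfolding eq[symmetric] by simp
qed

lemma Q_val: "k \<ge> 1 \<Longrightarrow> Q k = euler_mascheroni"
proof -
  assume k: "k \<ge> 1"
  have "(\<lambda>j. Q (j + k)) \<longlonglongrightarrow> euler_mascheroni" using LIMSEQ_ignore_initial_segment[OF Q_lim] .
  moreover have "(\<lambda>j. Q (j + k)) = (\<lambda>j. Q k)" using Q_const[OF k] by auto
  ultimately have "(\<lambda>j. Q k) \<longlonglongrightarrow> euler_mascheroni" by simp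
  then show ?thesis using LIMSEQ_unique tendsto_const by blast
qed

theorem theorem1:
  fixes l :: nat
  assumes "l \<ge> 2"
  shows "summable (\<lambda>m. (-1) ^ m * real_of_rat (e_seq (m + 1)) / real (m + 2)
            * (\<Sum>n\<in>{2 ^ (l - 1)..<2 ^ l}. 1 / real n ^ (m + 2)))
       \<and> euler_mascheroni =
           (\<Sum>n=1..2 ^ (l - 1) - 1. 1 / real n) - real (l - 1) * ln 2
           + (\<Sum>m. (-1) ^ m * real_of_rat (e_seq (m + 1)) / real (m + 2)
               * (\<Sum>n\<in>{2 ^ (l - 1)..<2 ^ l}. 1 / real n ^ (m + 2)))"
proof -
  define k where "k = l - 1"
  have k1: "k \<ge> 1" using assms by (simp add: k_def)
  have lk: "l = k + 1" using assms by (simp add: k_def)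
  have termeq: "(-1) ^ m * real_of_rat (e_seq (m + 1)) / real (m + 2)
            * (\<Sum>n\<in>{2 ^ (l - 1)..<2 ^ l}. 1 / real n ^ (m + 2))
         = (\<Sum>n::nat\<in>{2^k..<2^(k+1)}. dd (m+2) * (1 / real n)^(m+2))" for m
  proof -
    have "dd (m+2) = (-1) ^ m * real_of_rat (e_seq (m + 1)) / real (m + 2)"
      by (simp add: dd_def ee_def)
    then show ?thesis unfolding lk by (simp add: sum_distrib_left power_one_over)
  qed
  have N2: "(2::nat) \<le> 2^k" using k1 by (metis one_le_numeral power_increasing power_one_right)
  have S: "(\<lambda>m. \<Sum>n::nat\<in>{2^k..<2^(k+1)}. dd (m+2) * (1 / real n)^(m+2)) sums (\<Sum>n::nat\<in>{2^k..<2^(k+1)}. phi (1 / real n))"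
  proof (rule sums_sum)
    fix n :: nat assume "n \<in> {2^k..<2^(k+1)}"
    then have "real n \<ge> 2" using N2 by (metis atLeastLessThan_iff le_trans numeral_le_real_of_nat_iff)
    then have "\<bar>1 / real n\<bar> < 1" by simp
    then show "(\<lambda>m. dd (m+2) * (1 / real n)^(m+2)) sums phi (1 / real n)" by (rule phi_shift)
  qed
  then have S': "(\<lambda>m. (-1) ^ m * real_of_rat (e_seq (m + 1)) / real (m + 2)
            * (\<Sum>n\<in>{2 ^ (l - 1)..<2 ^ l}. 1 / real n ^ (m + 2))) sums (\<Sum>n::nat\<in>{2^k..<2^(k+1)}. phi (1 / real n))"
    by (simp only: termeq)
  have H: "(\<Sum>n=1..2 ^ (l - 1) - 1. 1 / real n) = harm (2^k - 1)"
    by (simp add: harm_def k_def inverse_eq_divide)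
  show ?thesis
  proof
    show "summable (\<lambda>m. (-1) ^ m * real_of_rat (e_seq (m + 1)) / real (m + 2)
            * (\<Sum>n\<in>{2 ^ (l - 1)..<2 ^ l}. 1 / real n ^ (m + 2)))" using S' by (rule sums_summable)
    show "euler_mascheroni =
           (\<Sum>n=1..2 ^ (l - 1) - 1. 1 / real n) - real (l - 1) * ln 2
           + (\<Sum>m. (-1) ^ m * real_of_rat (e_seq (m + 1)) / real (m + 2)
               * (\<Sum>n\<in>{2 ^ (l - 1)..<2 ^ l}. 1 / real n ^ (m + 2)))"
    proof -
      have V: "(\<Sum>m. (-1) ^ m * real_of_rat (e_seq (m + 1)) / real (m + 2)
            * (\<Sum>n\<in>{2 ^ (l - 1)..<2 ^ l}. 1 / real n ^ (m + 2))) = (\<Sum>n::nat\<in>{2^k..<2^(k+1)}. phi (1 / real n))"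
        using sums_unique[OF S'] by simp
      have Qf: "euler_mascheroni = harm (2^k - 1) - real k * ln 2 + (\<Sum>n::nat\<in>{2^k..<2^(k+1)}. phi (1 / real n))"
        using Q_val[OF k1] unfolding Q_def by simp
      show ?thesis unfolding V unfolding H unfolding k_def[symmetric] by (rule Qf)
    qed
  qed
qed

end
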